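(* Let $k$ be a difference field of characteristic $0$ and $R=k\{y_1,\ldots,y_n\}$. If $I,J$ are monomial $\sigma$-ideals of $R$, then $\langle I+J\rangle_r=\langle I\rangle_r+\langle J\rangle_r$.
   Context: A difference field is a field $k$ with a ring endomorphism $\sigma$; $R=k\{y_1,\ldots,y_n\}$ is the polynomial ring over $k$ in the variables $\sigma^j(y_i)$, with $\sigma$ extended naturally. For $p=\sum_ic_ix^i\in\mathbb{N}[x]$ and $a\in R$, $a^p=\prod_i(\sigma^i(a))^{c_i}$; monomials are $\mathbf{y}^{\mathbf{u}}=y_1^{u_1}\cdots y_n^{u_n}$ with $\mathbf{u}\in\mathbb{N}[x]^n$. A $\sigma$-ideal is an ideal stable under $\sigma$; monomial if generated by monomials; well-mixed if $ab\in I\Rightarrow a\sigma(b)\in I$. $\langle F\rangle_r$ is the smallest radical well-mixed $\sigma$-ideal containing $F$. *)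

theory Defs
  imports Main "HOL-Library.Poly_Mapping"
begin

text \<open>Difference polynomial ring k{y_1..y_n}: the variables sigma^j(y_i) are indexed by
  pairs (i, j) with i in a finite type 'n (CARD('n) = n) and j :: nat.\<close>

type_synonym ('n, 'k) dpoly = "(('n \<times> nat) \<Rightarrow>\<^sub>0 nat) \<Rightarrow>\<^sub>0 'k"

definition difference_field_hom :: "('k::field \<Rightarrow> 'k) \<Rightarrow> bool" where
  "difference_field_hom s \<longleftrightarrow> s 1 = 1 \<and> (\<forall>a b. s (a + b) = s a + s b) \<and> (\<forall>a b. s (a * b) = s a * s b)"

definition mono_shift :: "(('n \<times> nat) \<Rightarrow>\<^sub>0 nat) \<Rightarrow> (('n \<times> nat) \<Rightarrow>\<^sub>0 nat)" where
  "mono_shift m = (\<Sum>x\<in>Poly_Mapping.keys m. Poly_Mapping.single (fst x, Suc (snd x)) (Poly_Mapping.lookup m x))"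

definition sigma_ext :: "('k::field \<Rightarrow> 'k) \<Rightarrow> ('n, 'k) dpoly \<Rightarrow> ('n, 'k) dpoly" where
  "sigma_ext s p = (\<Sum>m\<in>Poly_Mapping.keys p. Poly_Mapping.single (mono_shift m) (s (Poly_Mapping.lookup p m)))"

definition is_ideal :: "'a::comm_ring_1 set \<Rightarrow> bool" where
  "is_ideal I \<longleftrightarrow> 0 \<in> I \<and> (\<forall>a\<in>I. \<forall>b\<in>I. a + b \<in> I) \<and> (\<forall>a\<in>I. \<forall>r. r * a \<in> I)"

definition ideal_gen :: "'a::comm_ring_1 set \<Rightarrow> 'a set" where
  "ideal_gen S = \<Inter>{I. is_ideal I \<and> S \<subseteq> I}"

definition sigma_ideal :: "('a::comm_ring_1 \<Rightarrow> 'a) \<Rightarrow> 'a set \<Rightarrow> bool" where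
  "sigma_ideal s I \<longleftrightarrow> is_ideal I \<and> (\<forall>a\<in>I. s a \<in> I)"

definition well_mixed :: "('a::comm_ring_1 \<Rightarrow> 'a) \<Rightarrow> 'a set \<Rightarrow> bool" where
  "well_mixed s I \<longleftrightarrow> (\<forall>a b. a * b \<in> I \<longrightarrow> a * s b \<in> I)"

definition radical_set :: "'a::comm_ring_1 set \<Rightarrow> bool" where
  "radical_set I \<longleftrightarrow> (\<forall>a (m::nat). 0 < m \<longrightarrow> a ^ m \<in> I \<longrightarrow> a \<in> I)"

definition dmonomials :: "('n, 'k::field) dpoly set" where
  "dmonomials = range (\<lambda>u. Poly_Mapping.single u 1)"

definition monomial_sigma_ideal :: "('k::field \<Rightarrow> 'k) \<Rightarrow> ('n, 'k) dpoly set \<Rightarrow> bool" where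
  "monomial_sigma_ideal s I \<longleftrightarrow> sigma_ideal (sigma_ext s) I \<and> (\<exists>S\<subseteq>dmonomials. I = ideal_gen S)"

definition rwm_closure :: "('k::field \<Rightarrow> 'k) \<Rightarrow> ('n, 'k) dpoly set \<Rightarrow> ('n, 'k) dpoly set" where
  "rwm_closure s F = \<Inter>{I. sigma_ideal (sigma_ext s) I \<and> well_mixed (sigma_ext s) I \<and> radical_set I \<and> F \<subseteq> I}"

definition set_sum :: "'a::plus set \<Rightarrow> 'a set \<Rightarrow> 'a set" where
  "set_sum A B = {a + b | a b. a \<in> A \<and> b \<in> B}"

end

theory Submission imports Defs "HOL-Library.Countable_Set" begin

definition pull :: "('a \<Rightarrow> 'b) \<Rightarrow> ('b \<Rightarrow>\<^sub>0 'c::zero) \<Rightarrow> ('a \<Rightarrow>\<^sub>0 'c)" where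
  "pull g p = Abs_poly_mapping (\<lambda>x. Poly_Mapping.lookup p (g x))"

lemma lookup_pull: assumes "inj g" shows "Poly_Mapping.lookup (pull g p) = (\<lambda>x. Poly_Mapping.lookup p (g x))"
proof -
  have "{x. Poly_Mapping.lookup p (g x) \<noteq> 0} = g -` {y. Poly_Mapping.lookup p y \<noteq> 0}" by auto
  then have "finite {x. Poly_Mapping.lookup p (g x) \<noteq> 0}"
    using finite_vimageI[OF finite_lookup assms] by simp
  then show ?thesis unfolding pull_def by simp
qed

lemma pull_add: "inj g \<Longrightarrow> pull g (p + q) = pull g p + (pull g q :: _ \<Rightarrow>\<^sub>0 'c::monoid_add)"
  by (rule poly_mapping_eqI) (simp add: lookup_pull lookup_add)

lemma pull_zero: "inj g \<Longrightarrow> pull g 0 = 0"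
  by (rule poly_mapping_eqI) (simp add: lookup_pull)

lemma pull_inj: assumes "inj g" "surj g" "pull g p = pull g q" shows "p = q"
proof (rule poly_mapping_eqI)
  fix y
  obtain x where "y = g x" using assms(2) by blast
  then show "Poly_Mapping.lookup p y = Poly_Mapping.lookup q y"
    using arg_cong[OF assms(3), of "\<lambda>r. Poly_Mapping.lookup r x"] by (simp add: lookup_pull assms(1))
qed

lemma pull_mult:
  fixes H :: "'a::monoid_add \<Rightarrow> 'b::monoid_add"
  assumes "bij H" and Hadd: "\<And>x y. H (x + y) = H x + H y"
  shows "pull H (a * b) = pull H a * (pull H b :: _ \<Rightarrow>\<^sub>0 'c::semiring_0)"
proof (rule poly_mapping_eqI)
  fix k
  have inj: "inj H" using assms(1) bij_is_inj by blast
  have eq: "(H k = H l + H q) = (k = l + q)" for l q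
    using inj by (metis Hadd injD)
  have "Poly_Mapping.lookup (pull H a * pull H b) k
     = (\<Sum>l. Poly_Mapping.lookup a (H l) * (\<Sum>q. Poly_Mapping.lookup b (H q) when k = l + q))"
    by (simp add: lookup_mult lookup_pull inj)
  also have "\<dots> = (\<Sum>l. Poly_Mapping.lookup a (H l) * (\<Sum>q. Poly_Mapping.lookup b q when H k = H l + q))"
  proof (rule Sum_any.cong)
    fix l
    have "(\<Sum>q. Poly_Mapping.lookup b q when H k = H l + q) = (\<Sum>q. Poly_Mapping.lookup b (H q) when k = l + q)"
      by (rule Sum_any.reindex_cong[OF assms(1)]) (simp add: fun_eq_iff eq)
    then show "Poly_Mapping.lookup a (H l) * (\<Sum>q. Poly_Mapping.lookup b (H q) when k = l + q) =
         Poly_Mapping.lookup a (H l) * (\<Sum>q. Poly_Mapping.lookup b q when H k = H l + q)" by simp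
  qed
  also have "\<dots> = (\<Sum>l. Poly_Mapping.lookup a l * (\<Sum>q. Poly_Mapping.lookup b q when H k = l + q))"
    by (rule Sum_any.reindex_cong[OF assms(1), symmetric]) (simp add: fun_eq_iff)
  also have "\<dots> = Poly_Mapping.lookup (pull H (a * b)) k"
    by (simp add: lookup_mult lookup_pull inj)
  finally show "Poly_Mapping.lookup (pull H (a * b)) k = Poly_Mapping.lookup (pull H a * pull H b) k" by simp
qed

lemma dpoly_no_zero_div:
  fixes a b :: "('n::finite, 'k::field) dpoly"
  assumes "a * b = 0" shows "a = 0 \<or> b = 0"
proof -
  define g :: "nat \<Rightarrow> 'n \<times> nat" where "g = from_nat_into UNIV"
  have "infinite (UNIV :: ('n \<times> nat) set)"
    by (simp add: finite_prod)
  then have bg: "bij g" unfolding g_def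
    using bij_betw_from_nat_into[of "UNIV :: ('n \<times> nat) set"] by simp
  define g' where "g' = inv g"
  have bg': "bij g'" unfolding g'_def using bg bij_imp_bij_inv by blast
  define H :: "(nat \<Rightarrow>\<^sub>0 nat) \<Rightarrow> (('n \<times> nat) \<Rightarrow>\<^sub>0 nat)" where "H = pull g'"
  have injH: "inj H" unfolding H_def
    by (metis bg' bij_is_inj bij_is_surj injI pull_inj)
  have "surj H"
  proof -
    have "H (pull g m) = m" for m
      using bij_is_inj[OF bg'] bij_is_inj[OF bg] bij_is_surj[OF bg]
      by (intro poly_mapping_eqI) (simp add: H_def lookup_pull g'_def surj_f_inv_f)
    then show ?thesis by (metis surjI)
  qed
  then have bH: "bij H" using injH by (simp add: bij_def)
  have Hadd: "H (x + y) = H x + H y" for x y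
    unfolding H_def using bg' bij_is_inj pull_add by blast
  have "pull H a * pull H b = pull H (a * b)" by (rule pull_mult[OF bH Hadd, symmetric])
  also have "\<dots> = 0" using assms pull_zero[OF injH] by simp
  finally have "pull H a = 0 \<or> pull H b = 0" by simp
  then show ?thesis using pull_zero[OF injH] pull_inj[OF injH \<open>surj H\<close>] by metis
qed

definition restr :: "('a \<Rightarrow> bool) \<Rightarrow> ('a \<Rightarrow>\<^sub>0 'c::zero) \<Rightarrow> ('a \<Rightarrow>\<^sub>0 'c)" where
  "restr P p = Abs_poly_mapping (\<lambda>x. if P x then Poly_Mapping.lookup p x else 0)"

lemma lookup_restr: "Poly_Mapping.lookup (restr P p) x = (if P x then Poly_Mapping.lookup p x else 0)"
proof -
  have "finite {x. (if P x then Poly_Mapping.lookup p x else 0) \<noteq> 0}"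
    by (rule finite_subset[OF _ finite_lookup[of p]]) auto
  then show ?thesis unfolding restr_def by simp
qed

lemma restr_eq_0: "restr P p = 0 \<longleftrightarrow> (\<forall>m\<in>Poly_Mapping.keys p. \<not> P m)"
  by (auto simp: poly_mapping_eq_iff fun_eq_iff lookup_restr in_keys_iff)

lemma restr_split: "p = restr P p + restr (\<lambda>x. \<not> P x) (p :: 'a \<Rightarrow>\<^sub>0 'c::monoid_add)"
  by (rule poly_mapping_eqI) (simp add: lookup_add lookup_restr)

lemma keys_restr: "Poly_Mapping.keys (restr P p) \<subseteq> Poly_Mapping.keys p"
  by (auto simp: in_keys_iff lookup_restr split: if_splits)

lemma restr_mult:
  assumes PP: "\<And>l q. P (l + q) \<longleftrightarrow> P l \<and> P q"
  shows "restr P (a * b) = restr P a * (restr P b :: 'a::monoid_add \<Rightarrow>\<^sub>0 'c::semiring_0)"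
proof (rule poly_mapping_eqI)
  fix k
  show "Poly_Mapping.lookup (restr P (a * b)) k = Poly_Mapping.lookup (restr P a * restr P b) k"
  proof (cases "P k")
    case True
    then have "(Poly_Mapping.lookup a l * (\<Sum>q. Poly_Mapping.lookup b q when k = l + q)) =
      ((if P l then Poly_Mapping.lookup a l else 0) * (\<Sum>q. (if P q then Poly_Mapping.lookup b q else 0) when k = l + q))" for l
    proof (cases "P l")
      case True
      then show ?thesis using PP \<open>P k\<close> by (intro arg_cong2[where f="(*)"] Sum_any.cong) (auto simp: when_def)
    next
      case False
      then have "\<And>q. (Poly_Mapping.lookup b q when k = l + q) = 0" using PP \<open>P k\<close> by (auto simp: when_def)
      then show ?thesis using False by simp
    qed
    then show ?thesis using True by (simp add: lookup_mult lookup_restr)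
  next
    case False
    have "((if P l then Poly_Mapping.lookup a l else 0) * (\<Sum>q. (if P q then Poly_Mapping.lookup b q else 0) when k = l + q)) = 0" for l
    proof -
      have "\<And>q. P l \<Longrightarrow> ((if P q then Poly_Mapping.lookup b q else 0) when k = l + q) = 0"
        using PP False by (auto simp: when_def)
      then show ?thesis by simp
    qed
    then show ?thesis using False by (simp add: lookup_mult lookup_restr)
  qed
qed

lemma restr_one:
  assumes "P 0" shows "restr P 1 = (1 :: 'a::monoid_add \<Rightarrow>\<^sub>0 'c::semiring_1)"
  by (rule poly_mapping_eqI) (simp add: lookup_restr lookup_one assms when_def)

lemma restr_power:
  assumes "P 0" "\<And>l q. P (l + q) \<longleftrightarrow> P l \<and> P q"
  shows "restr P ((f :: 'a::monoid_add \<Rightarrow>\<^sub>0 'c::semiring_1) ^ m) = restr P f ^ m"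
  by (induction m) (simp_all add: restr_one restr_mult assms)

lemma keys_plus_nat: "Poly_Mapping.keys (l + q) = Poly_Mapping.keys l \<union> Poly_Mapping.keys (q :: 'a \<Rightarrow>\<^sub>0 nat)"
  by (auto simp: in_keys_iff lookup_add)

lemma disj_mult: "(Poly_Mapping.keys (l + q) \<inter> T = {}) \<longleftrightarrow> (Poly_Mapping.keys l \<inter> T = {} \<and> Poly_Mapping.keys (q :: 'a \<Rightarrow>\<^sub>0 nat) \<inter> T = {})"
  by (auto simp: keys_plus_nat)

lemma lookup_mono_shift:
  "Poly_Mapping.lookup (mono_shift m) y = (case y of (i, 0) \<Rightarrow> 0 | (i, Suc j) \<Rightarrow> Poly_Mapping.lookup m (i, j))"
proof -
  have "Poly_Mapping.lookup (mono_shift m) y =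
     (\<Sum>x\<in>Poly_Mapping.keys m. if (fst x, Suc (snd x)) = y then Poly_Mapping.lookup m x else 0)"
    unfolding mono_shift_def by (simp add: lookup_sum lookup_single when_def)
  also have "\<dots> = (case y of (i, 0) \<Rightarrow> 0 | (i, Suc j) \<Rightarrow> Poly_Mapping.lookup m (i, j))"
  proof (cases y)
    case (Pair i j')
    show ?thesis
    proof (cases j')
      case 0 then show ?thesis using Pair by simp
    next
      case (Suc j)
      have "(\<Sum>x\<in>Poly_Mapping.keys m. if (fst x, Suc (snd x)) = y then Poly_Mapping.lookup m x else 0)
        = (\<Sum>x\<in>Poly_Mapping.keys m. if x = (i, j) then Poly_Mapping.lookup m x else 0)"
        using Pair Suc by (intro sum.cong) auto
      also have "\<dots> = Poly_Mapping.lookup m (i, j)"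
        by (simp add: in_keys_iff)
      finally show ?thesis using Pair Suc by simp
    qed
  qed
  finally show ?thesis .
qed

lemma mono_shift_single: "mono_shift (Poly_Mapping.single (i, j) 1) = Poly_Mapping.single (i, Suc j) 1"
  by (rule poly_mapping_eqI) (auto simp: lookup_mono_shift lookup_single when_def split: prod.splits nat.splits)

lemma keys_mono_shift: "(i, j) \<in> Poly_Mapping.keys m \<Longrightarrow> (i, Suc j) \<in> Poly_Mapping.keys (mono_shift m)"
  by (simp add: in_keys_iff lookup_mono_shift)

lemma sigma_ext_single: "sigma_ext s (Poly_Mapping.single u c) = (if c = 0 then 0 else Poly_Mapping.single (mono_shift u) (s c))"
  by (simp add: sigma_ext_def)

lemma keys_sigma_ext: "Poly_Mapping.keys (sigma_ext s f) \<subseteq> mono_shift ` Poly_Mapping.keys f"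
  unfolding sigma_ext_def
  by (rule order.trans[OF keys_sum]) (auto split: if_splits)

type_synonym 'n mono = "('n \<times> nat) \<Rightarrow>\<^sub>0 nat"

fun mpow :: "nat \<Rightarrow> 'n mono \<Rightarrow> 'n mono" where
  "mpow 0 u = 0"
| "mpow (Suc m) u = u + mpow m u"

lemma lookup_mpow: "Poly_Mapping.lookup (mpow m u) x = m * Poly_Mapping.lookup u x"
  by (induction m) (simp_all add: lookup_add)

definition goodS :: "'n mono set \<Rightarrow> bool" where
  "goodS S \<longleftrightarrow> (\<forall>u v. u \<in> S \<longrightarrow> u + v \<in> S) \<and> (\<forall>a b. a + b \<in> S \<longrightarrow> a + mono_shift b \<in> S)
     \<and> (\<forall>u m. 0 < m \<longrightarrow> mpow m u \<in> S \<longrightarrow> u \<in> S)"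

lemma goodS_shift_single:
  assumes "goodS S" "a + Poly_Mapping.single (i, j) 1 \<in> S"
  shows "a + Poly_Mapping.single (i, j + d) 1 \<in> S"
  using assms(2)
proof (induction d)
  case 0 then show ?case by simp
next
  case (Suc d)
  then have "a + mono_shift (Poly_Mapping.single (i, j + d) 1) \<in> S" using assms(1) unfolding goodS_def by blast
  then show ?case using mono_shift_single[of i "j + d"] by simp
qed

definition wt :: "'n mono \<Rightarrow> nat" where "wt v = sum (Poly_Mapping.lookup v) (Poly_Mapping.keys v)"

lemma wt_Sum_any: "wt v = (\<Sum>x. Poly_Mapping.lookup v x)"
  unfolding wt_def by (simp add: Sum_any.expand_set in_keys_iff Poly_Mapping.keys.rep_eq)

lemma wt_add: "wt (v + w) = wt v + wt w"
  unfolding wt_Sum_any lookup_add by (rule Sum_any.distrib) simp_all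

lemma wt_single: "wt (Poly_Mapping.single x 1) = 1"
  unfolding wt_def by simp

lemma goodS_collect_aux:
  assumes g: "goodS S"
  shows "wt v = n \<Longrightarrow> Poly_Mapping.keys v \<subseteq> {(i, j'). \<exists>j. (i, j) \<in> Poly_Mapping.keys u \<and> j' \<le> j} \<Longrightarrow> a + v \<in> S
     \<Longrightarrow> \<exists>w. Poly_Mapping.keys w \<subseteq> Poly_Mapping.keys u \<and> a + w \<in> S"
proof (induction n arbitrary: v a rule: less_induct)
  case (less n)
  show ?case
  proof (cases "v = 0")
    case True
    then show ?thesis using less.prems by (intro exI[of _ 0]) simp
  next
    case False
    then have "Poly_Mapping.keys v \<noteq> {}" by simp
    then obtain x where x: "x \<in> Poly_Mapping.keys v" by blast
    obtain i j' where xij: "x = (i, j')" by fastforce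
    have "x \<in> {(i, j'). \<exists>j. (i, j) \<in> Poly_Mapping.keys u \<and> j' \<le> j}" using less.prems(2) x by (rule subsetD)
    then have "\<exists>j. (i, j) \<in> Poly_Mapping.keys u \<and> j' \<le> j" using xij by simp
    then obtain j where j: "(i, j) \<in> Poly_Mapping.keys u" "j' \<le> j" by blast
    define v0 where "v0 = v - Poly_Mapping.single x 1"
    have vv: "v = v0 + Poly_Mapping.single x 1"
      using x by (intro poly_mapping_eqI) (auto simp: v0_def lookup_add lookup_minus lookup_single when_def in_keys_iff)
    have "wt v = wt v0 + wt (Poly_Mapping.single x 1)" by (subst vv, rule wt_add)
    then have "wt v = wt v0 + 1" by (simp only: wt_single)
    then have lt: "wt v0 < n" using less.prems(1) by simp
    have k0: "Poly_Mapping.keys v0 \<subseteq> Poly_Mapping.keys v"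
      by (auto simp: v0_def in_keys_iff lookup_minus)
    have "a + v = (a + v0) + Poly_Mapping.single (i, j') 1" using vv xij by (simp add: add.assoc)
    then have "(a + v0) + Poly_Mapping.single (i, j') 1 \<in> S" using less.prems(3) by simp
    then have "(a + v0) + Poly_Mapping.single (i, j' + (j - j')) 1 \<in> S"
      by (rule goodS_shift_single[OF g])
    then have "(a + v0) + Poly_Mapping.single (i, j) 1 \<in> S" using j(2) by simp
    then have s1: "(a + Poly_Mapping.single (i, j) 1) + v0 \<in> S" by (simp only: add.assoc add.commute[of v0])
    have k1: "Poly_Mapping.keys v0 \<subseteq> {(i, j'). \<exists>j. (i, j) \<in> Poly_Mapping.keys u \<and> j' \<le> j}"
      using k0 less.prems(2) by (rule order.trans)
    obtain w where w: "Poly_Mapping.keys w \<subseteq> Poly_Mapping.keys u" "(a + Poly_Mapping.single (i, j) 1) + w \<in> S"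
      using less.IH[OF lt refl k1 s1] by blast
    have "Poly_Mapping.keys (Poly_Mapping.single (i, j) 1 + w) \<subseteq> Poly_Mapping.keys u"
      using w(1) j(1) by (simp add: keys_plus_nat)
    moreover have "a + (Poly_Mapping.single (i, j) 1 + w) \<in> S" using w(2) by (simp only: add.assoc)
    ultimately show ?thesis by blast
  qed
qed

lemma goodS_collect:
  assumes g: "goodS S"
  shows "Poly_Mapping.keys v \<subseteq> {(i, j'). \<exists>j. (i, j) \<in> Poly_Mapping.keys u \<and> j' \<le> j} \<Longrightarrow> a + v \<in> S
     \<Longrightarrow> \<exists>w. Poly_Mapping.keys w \<subseteq> Poly_Mapping.keys u \<and> a + w \<in> S"
  using goodS_collect_aux[OF g refl] by blast

lemma goodS_downclosed:
  assumes g: "goodS S" and v: "v \<in> S"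
    and k: "Poly_Mapping.keys v \<subseteq> {(i, j'). \<exists>j. (i, j) \<in> Poly_Mapping.keys u \<and> j' \<le> j}"
  shows "u \<in> S"
proof -
  obtain w where w: "Poly_Mapping.keys w \<subseteq> Poly_Mapping.keys u" "w \<in> S"
    using goodS_collect[OF g k, of 0] v by auto
  define N where "N = Suc (sum (Poly_Mapping.lookup w) (Poly_Mapping.keys w))"
  have le: "Poly_Mapping.lookup w x \<le> N * Poly_Mapping.lookup u x" for x
  proof (cases "x \<in> Poly_Mapping.keys w")
    case True
    then have c1: "Poly_Mapping.lookup w x \<le> sum (Poly_Mapping.lookup w) (Poly_Mapping.keys w)"
      by (intro member_le_sum) auto
    have c2: "1 \<le> Poly_Mapping.lookup u x"
    proof -
      have "x \<in> Poly_Mapping.keys u" using True w(1) by blast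
      then have "Poly_Mapping.lookup u x \<noteq> 0" by (simp add: in_keys_iff)
      then show ?thesis by simp
    qed
    have B: "N * 1 \<le> N * Poly_Mapping.lookup u x" using c2 by (rule mult_le_mono2)
    have A: "Poly_Mapping.lookup w x \<le> N" unfolding N_def using c1 by (rule le_SucI)
    have B': "N \<le> N * Poly_Mapping.lookup u x" using B by (simp only: mult_1_right)
    show ?thesis using A B' by (rule order_trans)
  next
    case False then show ?thesis by (simp add: in_keys_iff)
  qed
  have eq: "mpow N u = w + (mpow N u - w)"
  proof (rule poly_mapping_eqI)
    fix x show "Poly_Mapping.lookup (mpow N u) x = Poly_Mapping.lookup (w + (mpow N u - w)) x"
      using le[of x] by (simp add: lookup_add lookup_minus lookup_mpow)
  qed
  have up: "\<And>u v. u \<in> S \<Longrightarrow> u + v \<in> S" using g unfolding goodS_def by blast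
  have rad: "\<And>u m. 0 < m \<Longrightarrow> mpow m u \<in> S \<Longrightarrow> u \<in> S"
    using g unfolding goodS_def by blast
  have "w + (mpow N u - w) \<in> S" using up w(2) by blast
  then have "mpow N u \<in> S" using eq by simp
  then show ?thesis using rad[of N] unfolding N_def by blast
qed

definition Ms :: "'n mono set \<Rightarrow> ('n, 'k::field) dpoly set" where
  "Ms S = {f. Poly_Mapping.keys f \<subseteq> S}"

lemma goodS_up: "goodS S \<Longrightarrow> u \<in> S \<Longrightarrow> u + v \<in> S"
  unfolding goodS_def by blast

lemma goodS_wm: "goodS S \<Longrightarrow> a + b \<in> S \<Longrightarrow> a + mono_shift b \<in> S"
  unfolding goodS_def by blast

lemma goodS_rad: "goodS S \<Longrightarrow> 0 < m \<Longrightarrow> mpow m u \<in> S \<Longrightarrow> u \<in> S"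
  unfolding goodS_def by blast

lemma Ms_ideal: assumes g: "goodS S" shows "is_ideal (Ms S :: ('n, 'k::field) dpoly set)"
  unfolding is_ideal_def
proof (intro conjI ballI allI)
  show "0 \<in> (Ms S :: ('n, 'k::field) dpoly set)" by (simp add: Ms_def)
next
  fix a b :: "('n, 'k) dpoly" assume "a \<in> Ms S" "b \<in> Ms S"
  then show "a + b \<in> Ms S" unfolding Ms_def using keys_add[of a b] by blast
next
  fix a r :: "('n, 'k) dpoly" assume a: "a \<in> Ms S"
  have "Poly_Mapping.keys (r * a) \<subseteq> S"
  proof
    fix m assume "m \<in> Poly_Mapping.keys (r * a)"
    then obtain x y where "m = x + y" "y \<in> Poly_Mapping.keys a" using keys_mult[of r a] by blast
    then have "y \<in> S" "m = y + x" using a by (auto simp: Ms_def add.commute)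
    then show "m \<in> S" using goodS_up[OF g] by blast
  qed
  then show "r * a \<in> Ms S" by (simp add: Ms_def)
qed

lemma goodS_shift: "goodS S \<Longrightarrow> u \<in> S \<Longrightarrow> mono_shift u \<in> S"
  using goodS_wm[of S 0 u] by simp

lemma Ms_sigma: assumes g: "goodS S" and f: "f \<in> Ms S" shows "sigma_ext s f \<in> Ms S"
  using keys_sigma_ext[of s f] f goodS_shift[OF g] unfolding Ms_def by blast

definition PT :: "('n \<times> nat) set \<Rightarrow> 'n mono \<Rightarrow> bool" where
  "PT T m \<longleftrightarrow> Poly_Mapping.keys m \<inter> T = {}"

lemma PT_add: "PT T (l + q) \<longleftrightarrow> PT T l \<and> PT T q"
  unfolding PT_def by (rule disj_mult)

lemma PT_zero: "PT T 0"
  by (simp add: PT_def)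

lemma restr_sigma:
  assumes T: "\<And>i j. (i, j) \<in> T \<Longrightarrow> (i, Suc j) \<in> T" and b: "restr (PT T) b = 0"
  shows "restr (PT T) (sigma_ext s b) = 0"
  unfolding restr_eq_0
proof
  fix m assume "m \<in> Poly_Mapping.keys (sigma_ext s b)"
  then obtain m0 where m0: "m0 \<in> Poly_Mapping.keys b" "m = mono_shift m0" using keys_sigma_ext by blast
  then have "\<not> PT (T) m0" using b unfolding restr_eq_0 by blast
  then obtain i j where "(i, j) \<in> Poly_Mapping.keys m0" "(i, j) \<in> T" unfolding PT_def by auto
  then have "(i, Suc j) \<in> Poly_Mapping.keys m" "(i, Suc j) \<in> T" using m0 keys_mono_shift T by auto
  then show "\<not> PT T m" unfolding PT_def by blast
qed

lemma Ms_separate: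
  assumes g: "goodS S" and gM: "(f :: ('n, 'k::field) dpoly) \<notin> Ms S"
  shows "\<exists>T. (\<forall>i j. (i, j) \<in> T \<longrightarrow> (i, Suc j) \<in> T) \<and> (\<forall>h \<in> (Ms S :: ('n, 'k) dpoly set). restr (PT T) h = 0)
     \<and> restr (PT T) f \<noteq> 0"
proof -
  from gM obtain u where u: "u \<in> Poly_Mapping.keys f" "u \<notin> S" unfolding Ms_def by blast
  define T where "T = {(i, j'). \<forall>j. (i, j) \<in> Poly_Mapping.keys u \<longrightarrow> j < j'}"
  have 1: "\<forall>i j. (i, j) \<in> T \<longrightarrow> (i, Suc j) \<in> T" unfolding T_def by auto
  have 2: "restr (PT T) h = 0" if h: "h \<in> (Ms S :: ('n, 'k) dpoly set)" for h
    unfolding restr_eq_0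
  proof
    fix m assume m: "m \<in> Poly_Mapping.keys h"
    show "\<not> PT T m"
    proof
      assume PTm: "PT T m"
      have "Poly_Mapping.keys m \<subseteq> {(i, j'). \<exists>j. (i, j) \<in> Poly_Mapping.keys u \<and> j' \<le> j}"
      proof
        fix x assume x: "x \<in> Poly_Mapping.keys m"
        obtain i j' where xij: "x = (i, j')" by fastforce
        have "x \<notin> T" using PTm x unfolding PT_def by blast
        then have "\<exists>j. (i, j) \<in> Poly_Mapping.keys u \<and> j' \<le> j" unfolding T_def xij by (auto simp: not_less)
        then show "x \<in> {(i, j'). \<exists>j. (i, j) \<in> Poly_Mapping.keys u \<and> j' \<le> j}" unfolding xij by simp
      qed
      moreover have "m \<in> S" using m h by (auto simp: Ms_def)
      ultimately have "u \<in> S" using goodS_downclosed[OF g] by blast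
      then show False using u by blast
    qed
  qed
  have "PT T u" unfolding PT_def T_def by auto
  then have "Poly_Mapping.lookup (restr (PT T) f) u \<noteq> 0" using u(1) by (simp add: lookup_restr in_keys_iff)
  then have 3: "restr (PT T) f \<noteq> 0" by auto
  show ?thesis using 1 2 3 by blast
qed

lemma dpoly_power_0:
  fixes x :: "('n::finite, 'k::field) dpoly"
  shows "x ^ m = 0 \<Longrightarrow> 0 < m \<Longrightarrow> x = 0"
proof (induction m)
  case 0 then show ?case by simp
next
  case (Suc m)
  then have "x * x ^ m = 0" by simp
  then have "x = 0 \<or> x ^ m = 0" by (rule dpoly_no_zero_div)
  then show ?case using Suc by (cases m) auto
qed

lemma Ms_radical:
  assumes g: "goodS S"
  shows "radical_set (Ms S :: ('n::finite, 'k::field) dpoly set)"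
  unfolding radical_set_def
proof (intro allI impI)
  fix f :: "('n, 'k) dpoly" and m :: nat
  assume m: "0 < m" and fm: "f ^ m \<in> Ms S"
  show "f \<in> Ms S"
  proof (rule ccontr)
    assume "f \<notin> Ms S"
    from Ms_separate[OF g this] obtain T where
      T: "\<forall>h \<in> (Ms S :: ('n, 'k) dpoly set). restr (PT T) h = 0" "restr (PT T) f \<noteq> 0" by blast
    have "restr (PT T) (f ^ m) = 0" using T(1) fm by blast
    then have "restr (PT T) f ^ m = 0" by (simp add: restr_power[where P="PT T", OF PT_zero PT_add])
    then show False using T(2) dpoly_power_0 m by blast
  qed
qed

lemma Ms_wm:
  assumes g: "goodS S"
  shows "well_mixed (sigma_ext s) (Ms S :: ('n::finite, 'k::field) dpoly set)"
  unfolding well_mixed_def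
proof (intro allI impI)
  fix a b :: "('n, 'k) dpoly"
  assume ab: "a * b \<in> Ms S"
  show "a * sigma_ext s b \<in> Ms S"
  proof (rule ccontr)
    assume "a * sigma_ext s b \<notin> Ms S"
    from Ms_separate[OF g this] obtain T where
      T: "\<forall>i j. (i, j) \<in> T \<longrightarrow> (i, Suc j) \<in> T" "\<forall>h \<in> (Ms S :: ('n, 'k) dpoly set). restr (PT T) h = 0"
         "restr (PT T) (a * sigma_ext s b) \<noteq> 0" by blast
    have "restr (PT T) (a * b) = 0" using T(2) ab by blast
    then have "restr (PT T) a * restr (PT T) b = 0" by (simp add: restr_mult[where P="PT T", OF PT_add])
    then have "restr (PT T) a = 0 \<or> restr (PT T) b = 0" by (rule dpoly_no_zero_div)
    moreover have "restr (PT T) b = 0 \<Longrightarrow> restr (PT T) (sigma_ext s b) = 0"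
      using restr_sigma[of T] T(1) by blast
    ultimately have "restr (PT T) a * restr (PT T) (sigma_ext s b) = 0" by auto
    then show False using T(3) by (simp add: restr_mult[where P="PT T", OF PT_add])
  qed
qed

lemma rwm_memI: "(\<And>X. sigma_ideal (sigma_ext s) X \<Longrightarrow> well_mixed (sigma_ext s) X \<Longrightarrow> radical_set X \<Longrightarrow> F \<subseteq> X \<Longrightarrow> x \<in> X)
   \<Longrightarrow> x \<in> rwm_closure s F"
  unfolding rwm_closure_def by (rule InterI) simp

lemma rwm_memD: "x \<in> rwm_closure s F \<Longrightarrow> sigma_ideal (sigma_ext s) X \<Longrightarrow> well_mixed (sigma_ext s) X \<Longrightarrow> radical_set X \<Longrightarrow> F \<subseteq> X
   \<Longrightarrow> x \<in> X"
  unfolding rwm_closure_def by (erule InterD) simp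

lemma rwm_closure_props:
  shows "is_ideal (rwm_closure s F)" "\<And>a. a \<in> rwm_closure s F \<Longrightarrow> sigma_ext s a \<in> rwm_closure s F"
    "well_mixed (sigma_ext s) (rwm_closure s F)" "radical_set (rwm_closure s F)" "F \<subseteq> rwm_closure s F"
proof -
  show "is_ideal (rwm_closure s F)" unfolding is_ideal_def
  proof (intro conjI ballI allI)
    show "0 \<in> rwm_closure s F" by (rule rwm_memI) (simp add: sigma_ideal_def is_ideal_def)
  next
    fix a b assume a: "a \<in> rwm_closure s F" and b: "b \<in> rwm_closure s F"
    show "a + b \<in> rwm_closure s F"
    proof (rule rwm_memI)
      fix X assume X: "sigma_ideal (sigma_ext s) X" "well_mixed (sigma_ext s) X" "radical_set X" "F \<subseteq> X"
      have "a \<in> X" "b \<in> X" using rwm_memD[OF a X] rwm_memD[OF b X] by auto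
      then show "a + b \<in> X" using X(1) unfolding sigma_ideal_def is_ideal_def by blast
    qed
  next
    fix a r assume a: "a \<in> rwm_closure s F"
    show "r * a \<in> rwm_closure s F"
    proof (rule rwm_memI)
      fix X assume X: "sigma_ideal (sigma_ext s) X" "well_mixed (sigma_ext s) X" "radical_set X" "F \<subseteq> X"
      have "a \<in> X" using rwm_memD[OF a X] by auto
      then show "r * a \<in> X" using X(1) unfolding sigma_ideal_def is_ideal_def by blast
    qed
  qed
  show "\<And>a. a \<in> rwm_closure s F \<Longrightarrow> sigma_ext s a \<in> rwm_closure s F"
  proof -
    fix a assume a: "a \<in> rwm_closure s F"
    show "sigma_ext s a \<in> rwm_closure s F"
    proof (rule rwm_memI)
      fix X assume X: "sigma_ideal (sigma_ext s) X" "well_mixed (sigma_ext s) X" "radical_set X" "F \<subseteq> X"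
      have "a \<in> X" using rwm_memD[OF a X] by auto
      then show "sigma_ext s a \<in> X" using X(1) unfolding sigma_ideal_def by blast
    qed
  qed
  show "well_mixed (sigma_ext s) (rwm_closure s F)" unfolding well_mixed_def
  proof (intro allI impI)
    fix a b assume ab: "a * b \<in> rwm_closure s F"
    show "a * sigma_ext s b \<in> rwm_closure s F"
    proof (rule rwm_memI)
      fix X assume X: "sigma_ideal (sigma_ext s) X" "well_mixed (sigma_ext s) X" "radical_set X" "F \<subseteq> X"
      have "a * b \<in> X" using rwm_memD[OF ab X] by auto
      then show "a * sigma_ext s b \<in> X" using X(2) unfolding well_mixed_def by blast
    qed
  qed
  show "radical_set (rwm_closure s F)" unfolding radical_set_def
  proof (intro allI impI)
    fix a and m :: nat assume m: "0 < m" and am: "a ^ m \<in> rwm_closure s F"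
    show "a \<in> rwm_closure s F"
    proof (rule rwm_memI)
      fix X assume X: "sigma_ideal (sigma_ext s) X" "well_mixed (sigma_ext s) X" "radical_set X" "F \<subseteq> X"
      have "a ^ m \<in> X" using rwm_memD[OF am X] by auto
      then show "a \<in> X" using X(3) m unfolding radical_set_def by blast
    qed
  qed
  show "F \<subseteq> rwm_closure s F"
  proof
    fix x assume "x \<in> F"
    then show "x \<in> rwm_closure s F" by (intro rwm_memI) blast
  qed
qed

lemma rwm_closure_min:
  assumes "sigma_ideal (sigma_ext s) X" "well_mixed (sigma_ext s) X" "radical_set X" "F \<subseteq> X"
  shows "rwm_closure s F \<subseteq> X"
  using assms unfolding rwm_closure_def by blast

lemma rwm_closure_sigma_ideal: "sigma_ideal (sigma_ext s) (rwm_closure s F)"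
  using rwm_closure_props(1,2) unfolding sigma_ideal_def by blast

lemma single_power: "(Poly_Mapping.single u (1::'k::comm_semiring_1)) ^ m = Poly_Mapping.single (mpow m u) 1"
  by (induction m) (simp_all add: mult_single)

lemma poly_mapping_decomp: "f = (\<Sum>u\<in>Poly_Mapping.keys f. Poly_Mapping.single u (Poly_Mapping.lookup f u))"
proof (rule poly_mapping_eqI)
  fix x
  show "Poly_Mapping.lookup f x = Poly_Mapping.lookup (\<Sum>u\<in>Poly_Mapping.keys f. Poly_Mapping.single u (Poly_Mapping.lookup f u)) x"
    by (simp add: lookup_sum lookup_single when_def in_keys_iff)
qed

lemma ideal_sum: assumes "is_ideal I" "finite A" "\<And>a. a \<in> A \<Longrightarrow> g a \<in> I" shows "sum g A \<in> I"
  using assms(2,3) by (induction A rule: finite_induct) (use assms(1) in \<open>auto simp: is_ideal_def\<close>)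

definition SofC :: "('n, 'k::field) dpoly set \<Rightarrow> 'n mono set" where
  "SofC C = {u. Poly_Mapping.single u 1 \<in> C}"

lemma closure_monomial:
  fixes s :: "'k::field \<Rightarrow> 'k" and I :: "('n::finite, 'k) dpoly set"
  assumes s1: "s 1 = 1" and G: "G \<subseteq> dmonomials" "I = ideal_gen G"
  shows "goodS (SofC (rwm_closure s I))" "rwm_closure s I = Ms (SofC (rwm_closure s I))"
proof -
  let ?C = "rwm_closure s I"
  let ?S = "SofC ?C"
  note P = rwm_closure_props[where s=s and F=I]
  have mulC: "r * a \<in> ?C" if "a \<in> ?C" for r a using P(1) that unfolding is_ideal_def by blast
  show g: "goodS ?S" unfolding goodS_def
  proof (intro conjI allI impI)
    fix u v assume "u \<in> ?S"
    then have "Poly_Mapping.single v 1 * Poly_Mapping.single u 1 \<in> ?C" unfolding SofC_def using mulC by blast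
    then show "u + v \<in> ?S" unfolding SofC_def by (simp add: mult_single add.commute)
  next
    fix a b assume "a + b \<in> ?S"
    then have "Poly_Mapping.single a 1 * Poly_Mapping.single b 1 \<in> ?C" unfolding SofC_def by (simp add: mult_single)
    then have "Poly_Mapping.single a 1 * sigma_ext s (Poly_Mapping.single b 1) \<in> ?C"
      using P(3) unfolding well_mixed_def by blast
    then show "a + mono_shift b \<in> ?S" unfolding SofC_def by (simp add: sigma_ext_single s1 mult_single)
  next
    fix u m assume m: "0 < (m::nat)" "mpow m u \<in> ?S"
    then have "Poly_Mapping.single u (1::'k) ^ m \<in> ?C" unfolding SofC_def by (simp add: single_power)
    then have "Poly_Mapping.single u (1::'k) \<in> ?C" using P(4) m(1) unfolding radical_set_def by blast
    then show "u \<in> ?S" unfolding SofC_def by simp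
  qed
  have sub1: "Ms ?S \<subseteq> ?C"
  proof
    fix f :: "('n, 'k) dpoly" assume "f \<in> Ms ?S"
    then have k: "Poly_Mapping.keys f \<subseteq> ?S" by (simp add: Ms_def)
    have "(\<Sum>u\<in>Poly_Mapping.keys f. Poly_Mapping.single u (Poly_Mapping.lookup f u)) \<in> ?C"
    proof (rule ideal_sum[OF P(1) finite_keys])
      fix u assume "u \<in> Poly_Mapping.keys f"
      then have "Poly_Mapping.single u 1 \<in> ?C" using k unfolding SofC_def by blast
      then have "Poly_Mapping.single 0 (Poly_Mapping.lookup f u) * Poly_Mapping.single u 1 \<in> ?C" by (rule mulC)
      then show "Poly_Mapping.single u (Poly_Mapping.lookup f u) \<in> ?C" by (simp add: mult_single)
    qed
    then show "f \<in> ?C" using poly_mapping_decomp[of f] by simp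
  qed
  have sub2: "?C \<subseteq> Ms ?S"
  proof (rule rwm_closure_min)
    show "sigma_ideal (sigma_ext s) (Ms ?S)" unfolding sigma_ideal_def using Ms_ideal[OF g] Ms_sigma[OF g] by blast
    show "well_mixed (sigma_ext s) (Ms ?S)" by (rule Ms_wm[OF g])
    show "radical_set (Ms ?S)" by (rule Ms_radical[OF g])
    have "G \<subseteq> Ms ?S"
    proof
      fix x assume x: "x \<in> G"
      then obtain u where u: "x = Poly_Mapping.single u 1" using G(1) unfolding dmonomials_def by blast
      have "G \<subseteq> ideal_gen G" unfolding ideal_gen_def by blast
      then have "G \<subseteq> I" using G(2) by simp
      then have "x \<in> ?C" using x P(5) by blast
      then show "x \<in> Ms ?S" using u by (simp add: Ms_def SofC_def)
    qed
    then have hh: "ideal_gen G \<subseteq> Ms ?S" unfolding ideal_gen_def using Ms_ideal[OF g] by (intro Inter_lower) simp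
    have "\<And>Z. Z = ideal_gen G \<Longrightarrow> Z \<subseteq> Ms ?S" using hh by simp
    then show "I \<subseteq> Ms ?S" using G(2) by blast
  qed
  show "?C = Ms ?S" using sub1 sub2 by (rule equalityI[rotated])
qed

lemma goodS_union: assumes gA: "goodS A" and gB: "goodS B" shows "goodS (A \<union> B)"
  unfolding goodS_def
proof (intro conjI allI impI)
  fix u v assume "u \<in> A \<union> B" then show "u + v \<in> A \<union> B"
    using goodS_up[OF gA, of u v] goodS_up[OF gB, of u v] by blast
next
  fix a b assume "a + b \<in> A \<union> B" then show "a + mono_shift b \<in> A \<union> B"
    using goodS_wm[OF gA, of a b] goodS_wm[OF gB, of a b] by blast
next
  fix u m assume "0 < (m::nat)" "mpow m u \<in> A \<union> B" then show "u \<in> A \<union> B"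
    using goodS_rad[OF gA, of m u] goodS_rad[OF gB, of m u] by blast
qed

lemma Ms_union: "Ms (A \<union> B) = set_sum (Ms A) (Ms B :: ('n, 'k::field) dpoly set)"
proof
  show "Ms (A \<union> B) \<subseteq> set_sum (Ms A) (Ms B :: ('n, 'k) dpoly set)"
  proof
    fix f :: "('n, 'k) dpoly" assume f: "f \<in> Ms (A \<union> B)"
    have "restr (\<lambda>m. m \<in> A) f \<in> Ms A" using keys_restr[of "\<lambda>m. m \<in> A" f]
      by (auto simp: Ms_def in_keys_iff lookup_restr split: if_splits)
    moreover have "restr (\<lambda>m. m \<notin> A) f \<in> Ms B" using f keys_restr[of "\<lambda>m. m \<notin> A" f]
      by (auto simp: Ms_def in_keys_iff lookup_restr split: if_splits)
    ultimately show "f \<in> set_sum (Ms A) (Ms B :: ('n, 'k) dpoly set)" unfolding set_sum_def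
      using restr_split[of f "\<lambda>m. m \<in> A"] by (intro CollectI exI conjI)
  qed
next
  show "set_sum (Ms A) (Ms B :: ('n, 'k) dpoly set) \<subseteq> Ms (A \<union> B)"
  proof
    fix x assume "x \<in> set_sum (Ms A) (Ms B :: ('n, 'k) dpoly set)"
    then obtain a b where ab: "x = a + b" "a \<in> Ms A" "b \<in> Ms B" unfolding set_sum_def by blast
    then have "Poly_Mapping.keys a \<subseteq> A \<union> B" "Poly_Mapping.keys b \<subseteq> A \<union> B" by (auto simp: Ms_def)
    then show "x \<in> Ms (A \<union> B)" using keys_add[of a b] ab(1) by (auto simp: Ms_def)
  qed
qed

theorem corollary5p13:
  fixes s :: "'k::field_char_0 \<Rightarrow> 'k"
    and I J :: "('n::finite, 'k) dpoly set"
  assumes "difference_field_hom s"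
    and "monomial_sigma_ideal s I"
    and "monomial_sigma_ideal s J"
  shows "rwm_closure s (set_sum I J) = set_sum (rwm_closure s I) (rwm_closure s J)"
proof -
  have s1: "s 1 = 1" using assms(1) unfolding difference_field_hom_def by blast
  obtain GI where GI: "GI \<subseteq> dmonomials" "I = ideal_gen GI" using assms(2) unfolding monomial_sigma_ideal_def by blast
  obtain GJ where GJ: "GJ \<subseteq> dmonomials" "J = ideal_gen GJ" using assms(3) unfolding monomial_sigma_ideal_def by blast
  have J0: "0 \<in> J" using assms(3) unfolding monomial_sigma_ideal_def sigma_ideal_def is_ideal_def by blast
  have I0: "0 \<in> I" using assms(2) unfolding monomial_sigma_ideal_def sigma_ideal_def is_ideal_def by blast
  define SI where "SI = SofC (rwm_closure s I)"
  define SJ where "SJ = SofC (rwm_closure s J)"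
  have gI: "goodS SI" and eI: "rwm_closure s I = Ms SI" using closure_monomial[where s=s and G=GI and I=I, OF s1 GI(1) GI(2)] SI_def by auto
  have gJ: "goodS SJ" and eJ: "rwm_closure s J = Ms SJ" using closure_monomial[where s=s and G=GJ and I=J, OF s1 GJ(1) GJ(2)] SJ_def by auto
  have g: "goodS (SI \<union> SJ)" using gI gJ by (rule goodS_union)
  have idM: "is_ideal (Ms (SI \<union> SJ) :: ('n, 'k) dpoly set)" by (rule Ms_ideal[OF g])
  have "rwm_closure s (set_sum I J) \<subseteq> Ms (SI \<union> SJ)"
  proof (rule rwm_closure_min)
    show "sigma_ideal (sigma_ext s) (Ms (SI \<union> SJ))" unfolding sigma_ideal_def using idM Ms_sigma[OF g] by blast
    show "well_mixed (sigma_ext s) (Ms (SI \<union> SJ))" by (rule Ms_wm[OF g])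
    show "radical_set (Ms (SI \<union> SJ))" by (rule Ms_radical[OF g])
    have "I \<subseteq> Ms SI" using rwm_closure_props(5)[where s=s and F=I] eI by simp
    moreover have "J \<subseteq> Ms SJ" using rwm_closure_props(5)[where s=s and F=J] eJ by simp
    ultimately have IJ: "I \<subseteq> Ms (SI \<union> SJ)" "J \<subseteq> Ms (SI \<union> SJ)" unfolding Ms_def by auto
    show "set_sum I J \<subseteq> Ms (SI \<union> SJ)"
    proof
      fix x assume "x \<in> set_sum I J"
      then obtain a b where ab: "x = a + b" "a \<in> I" "b \<in> J" unfolding set_sum_def by blast
      then show "x \<in> Ms (SI \<union> SJ)" using IJ idM unfolding is_ideal_def by blast
    qed
  qed
  also have "\<dots> = set_sum (rwm_closure s I) (rwm_closure s J)" using Ms_union eI eJ by simp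
  finally have le: "rwm_closure s (set_sum I J) \<subseteq> set_sum (rwm_closure s I) (rwm_closure s J)" .
  let ?C = "rwm_closure s (set_sum I J)"
  note P = rwm_closure_props[where s=s and F="set_sum I J"]
  have "I \<subseteq> set_sum I J"
  proof
    fix a assume "a \<in> I"
    then show "a \<in> set_sum I J" unfolding set_sum_def using J0 by (intro CollectI exI[of _ a] exI[of _ 0]) simp
  qed
  then have CI: "rwm_closure s I \<subseteq> ?C"
    using rwm_closure_min[OF rwm_closure_sigma_ideal P(3) P(4)] P(5) by blast
  have "J \<subseteq> set_sum I J"
  proof
    fix b assume "b \<in> J"
    then show "b \<in> set_sum I J" unfolding set_sum_def using I0 by (intro CollectI exI[of _ 0] exI[of _ b]) simp
  qed
  then have CJ: "rwm_closure s J \<subseteq> ?C"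
    using rwm_closure_min[OF rwm_closure_sigma_ideal P(3) P(4)] P(5) by blast
  have "set_sum (rwm_closure s I) (rwm_closure s J) \<subseteq> ?C"
  proof
    fix x assume "x \<in> set_sum (rwm_closure s I) (rwm_closure s J)"
    then obtain a b where ab: "x = a + b" "a \<in> rwm_closure s I" "b \<in> rwm_closure s J" unfolding set_sum_def by blast
    then have "a \<in> ?C" "b \<in> ?C" using CI CJ by blast+
    then show "x \<in> ?C" using P(1) ab(1) unfolding is_ideal_def by blast
  qed
  then show ?thesis using le by blast
qed

end
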